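(* The Eulerian polynomials $A_n(q)=\sum_{k=0}^nA(n,k)q^k$, $n\ge 0$, form a $q$-log-convex sequence.
   Context: The Eulerian numbers $A(n,k)$ are given by $A(0,0)=1$, $A(n,k)=0$ unless $0\le k\le n$, and $A(n,k)=kA(n-1,k)+(n-k+1)A(n-1,k-1)$ for $n\ge 1$; for $n\ge1$, $A(n,k)$ is the number of permutations of $\{1,\dots,n\}$ with exactly $k-1$ descents. For real polynomials $f,g$ write $f\le_q g$ if $g-f$ has nonnegative coefficients; a sequence $\{P_n(q)\}_{n\ge0}$ is $q$-log-convex if $P_n(q)^2\le_q P_{n-1}(q)P_{n+1}(q)$ for all $n\ge 1$. *)

theory Defs
  imports "HOL-Computational_Algebra.Polynomial"
begin

fun eulerian :: "nat \<Rightarrow> nat \<Rightarrow> nat" where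
  "eulerian 0 k = (if k = 0 then 1 else 0)"
| "eulerian (Suc n) k =
     (if k > Suc n then 0
      else k * eulerian n k + (if k = 0 then 0 else (Suc n - k + 1) * eulerian n (k - 1)))"

definition eulerian_poly :: "nat \<Rightarrow> real poly" where
  "eulerian_poly n = (\<Sum>k\<le>n. monom (real (eulerian n k)) k)"

definition q_le :: "real poly \<Rightarrow> real poly \<Rightarrow> bool" where
  "q_le f g \<longleftrightarrow> (\<forall>i. coeff (g - f) i \<ge> 0)"

definition q_log_convex :: "(nat \<Rightarrow> real poly) \<Rightarrow> bool" where
  "q_log_convex P \<longleftrightarrow> (\<forall>n\<ge>1. q_le ((P n)^2) (P (n - 1) * P (n + 1)))"

end

theory Submission
  imports Defs
begin

definition qX :: "real poly" where "qX = [:0,1:]"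

lemma qX_mult: "qX * p = pCons 0 p"
  by (simp add: qX_def)

definition Top :: "nat \<Rightarrow> real poly \<Rightarrow> real poly" where
  "Top n p = of_nat n * p + (1 - qX) * pderiv p"

lemma Top_add: "Top n (p + r) = Top n p + Top n r"
  by (simp add: Top_def pderiv_add algebra_simps)

lemma Top_diff: "Top n (p - r) = Top n p - Top n r"
  by (simp add: Top_def pderiv_diff algebra_simps)

lemma Top_0 [simp]: "Top n 0 = 0"
  by (simp add: Top_def)

lemma Top_cmult: "pderiv c = 0 \<Longrightarrow> Top n (c * p) = c * Top n p"
  by (simp add: Top_def pderiv_mult algebra_simps)

lemma Top_Suc: "Top (Suc n) p = Top n p + p"
  by (simp add: Top_def algebra_simps)

lemma pderiv_qX: "pderiv qX = 1"
  by (simp add: qX_def pderiv_pCons)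

lemma Top_qX: "Top (Suc n) (qX * p) = qX * Top n p + p"
  by (simp add: Top_def pderiv_mult pderiv_qX algebra_simps)

lemma eulerian_zero: "n < k \<Longrightarrow> eulerian n k = 0"
proof (induction n arbitrary: k)
  case 0 then show ?case by simp
next
  case (Suc n) then show ?case by simp
qed

lemma coeff_eulerian_poly: "coeff (eulerian_poly n) i = real (eulerian n i)"
proof -
  have "coeff (eulerian_poly n) i = (\<Sum>k\<le>n. if k = i then real (eulerian n k) else 0)"
    by (simp add: eulerian_poly_def coeff_sum)
  also have "\<dots> = real (eulerian n i)"
    using eulerian_zero[of n i] by (auto simp: sum.delta)
  finally show ?thesis .
qed

lemma eulerian_poly_0: "eulerian_poly 0 = 1"
  by (simp add: eulerian_poly_def)

lemma eulerian_poly_Suc: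
  "eulerian_poly (Suc n) = qX * eulerian_poly n + qX * Top n (eulerian_poly n)"
proof (rule poly_eqI)
  fix i
  let ?A = "eulerian_poly n"
  show "coeff (eulerian_poly (Suc n)) i = coeff (qX * ?A + qX * Top n ?A) i"
  proof (cases i)
    case 0 then show ?thesis by (simp add: qX_mult coeff_eulerian_poly)
  next
    case (Suc j)
    have c1: "coeff ((1 - qX) * pderiv ?A) j =
       real (Suc j) * real (eulerian n (Suc j)) - real j * real (eulerian n j)"
      by (cases j) (simp_all add: algebra_simps qX_mult coeff_pderiv coeff_eulerian_poly)
    have "coeff (qX * ?A + qX * Top n ?A) i =
       real (eulerian n j) + real n * real (eulerian n j) + coeff ((1 - qX) * pderiv ?A) j"
      using Suc by (simp add: qX_mult Top_def coeff_eulerian_poly of_nat_poly)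
    also have "\<dots> = real (Suc j) * real (eulerian n (Suc j)) + (real n + 1 - real j) * real (eulerian n j)"
      using c1 by (simp add: algebra_simps)
    finally have r: "coeff (qX * ?A + qX * Top n ?A) i = \<dots>" .
    show ?thesis
    proof (cases "j \<le> n")
      case True
      have e1: "eulerian (Suc n) (Suc j) = Suc j * eulerian n (Suc j) + (n - j + 1) * eulerian n j"
        using True by simp
      have e2: "real (n - j + 1) = real n + 1 - real j" using True by (simp add: of_nat_diff)
      have "real (eulerian (Suc n) (Suc j)) = real (Suc j) * real (eulerian n (Suc j)) + (real n + 1 - real j) * real (eulerian n j)"
        unfolding e1 using e2 by (simp only: of_nat_add of_nat_mult)
      then show ?thesis using r Suc by (simp add: coeff_eulerian_poly)
    next
      case False
      then show ?thesis using r Suc eulerian_zero[of n j] eulerian_zero[of n "Suc j"]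
        by (simp add: coeff_eulerian_poly)
    qed
  qed
qed

fun Lt :: "nat \<Rightarrow> nat \<Rightarrow> real poly" where
  "Lt n 0 = eulerian_poly n"
| "Lt n (Suc k) = smult (1 / (real k + 1)^2) (Top n (Lt n k) - of_nat k * Lt n k)"

lemma cpow: "((of_nat k + 1)^2 :: real poly) = [:(real k + 1)^2:]"
  by (simp add: of_nat_poly power2_eq_square one_pCons algebra_simps)

lemma cpow_smult: "((of_nat k + 1)^2 :: real poly) * p = smult ((real k + 1)^2) p"
  unfolding cpow by simp

lemma TL: "Top n (Lt n k) = (of_nat k + 1)^2 * Lt n (Suc k) + of_nat k * Lt n k"
proof -
  have "(of_nat k + 1)^2 * Lt n (Suc k) = smult ((real k + 1)^2) (Lt n (Suc k))"
    by (rule cpow_smult)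
  also have "\<dots> = Top n (Lt n k) - of_nat k * Lt n k"
    by simp
  finally show ?thesis by simp
qed

declare Lt.simps(2)[simp del]

definition Pv :: "nat \<Rightarrow> nat \<Rightarrow> real poly" where
  "Pv n k = (if k = 0 then 0 else Lt n (k - 1))"

lemma TPv: "Top n (Pv n k) - of_nat k * Pv n k + Pv n k = of_nat k ^ 2 * Lt n k"
proof (cases k)
  case 0 then show ?thesis by (simp add: Pv_def)
next
  case (Suc k')
  then show ?thesis using TL[of n k'] by (simp add: Pv_def algebra_simps)
qed

lemma pderiv_cpow: "pderiv ((of_nat k + 1) ^ 2 :: real poly) = 0"
  by (simp add: pderiv_mult pderiv_add power2_eq_square)

lemma prodF: "Lt (Suc n) k = Pv n k + of_nat k * Lt n k + qX * Lt n k + qX * Top n (Lt n k)"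
proof (induction k)
  case 0
  then show ?case by (simp add: Pv_def eulerian_poly_Suc)
next
  case (Suc k)
  define L where "L = Lt n k"
  define L1 where "L1 = Lt n (Suc k)"
  define P where "P = Pv n k"
  define Y where "Y = Lt (Suc n) k"
  have IH: "Y = P + of_nat k * L + qX * L + qX * Top n L"
    using Suc.IH by (simp add: Y_def P_def L_def)
  have TLk: "Top n L = (of_nat k + 1)^2 * L1 + of_nat k * L"
    unfolding L_def L1_def by (rule TL)
  have TTL: "Top n (Top n L) = (of_nat k + 1)^2 * Top n L1 + of_nat k * Top n L"
  proof -
    have "Top n ((of_nat k + 1)^2 * L1 + of_nat k * L) = (of_nat k + 1)^2 * Top n L1 + of_nat k * Top n L"
      by (simp add: Top_add Top_cmult pderiv_cpow)
    then show ?thesis by (simp only: TLk[symmetric])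
  qed
  have TP: "Top n P - of_nat k * P + P = of_nat k ^ 2 * L"
    unfolding P_def L_def by (rule TPv)
  have TY: "Top (Suc n) Y = (of_nat k + 1)^2 * Lt (Suc n) (Suc k) + of_nat k * Y"
    using TL[of "Suc n" k] by (simp add: Y_def)
  have TY2: "Top (Suc n) Y = (Top n P + P) + of_nat k * (Top n L + L) + (qX * Top n L + L)
      + (qX * Top n (Top n L) + Top n L)"
    by (simp only: IH Top_add Top_qX) (simp add: Top_cmult Top_Suc distrib_left)
  have key: "(of_nat k + 1)^2 * Lt (Suc n) (Suc k) =
     (of_nat k + 1)^2 * (L + of_nat (Suc k) * L1 + qX * L1 + qX * Top n L1)"
  proof -
    have "(of_nat k + 1)^2 * Lt (Suc n) (Suc k) = Top (Suc n) Y - of_nat k * Y"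
      using TY by simp
    also have "\<dots> = (of_nat k + 1)^2 * (L + of_nat (Suc k) * L1 + qX * L1 + qX * Top n L1)"
    proof -
      have TP': "Top n P = of_nat k ^ 2 * L + of_nat k * P - P" using TP by (simp add: algebra_simps)
      show ?thesis
        apply (subst TY2) unfolding IH unfolding TTL TP' unfolding TLk
        by (simp add: algebra_simps power2_eq_square)
    qed
    finally show ?thesis .
  qed
  have nz: "((of_nat k + 1)^2 :: real poly) \<noteq> 0"
    by (metis of_nat_Suc of_nat_eq_0_iff power_not_zero nat.distinct(1) add.commute)
  have "Lt (Suc n) (Suc k) = L + of_nat (Suc k) * L1 + qX * L1 + qX * Top n L1"
    using key by (simp only: mult_left_cancel[OF nz])
  then show ?case by (simp add: Pv_def L_def L1_def)
qed


definition nn :: "real poly \<Rightarrow> bool" where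
  "nn p \<longleftrightarrow> (\<forall>i. coeff p i \<ge> 0)"

lemma nn_0 [simp]: "nn 0" by (simp add: nn_def)
lemma nn_1 [simp]: "nn 1" by (simp add: nn_def coeff_1)
lemma nn_qX [simp]: "nn qX" by (simp add: nn_def qX_def coeff_pCons')
lemma nn_of_nat [simp]: "nn (of_nat n)" by (simp add: nn_def of_nat_poly coeff_pCons')
lemma nn_add [intro]: "nn p \<Longrightarrow> nn r \<Longrightarrow> nn (p + r)"
  by (simp add: nn_def)
lemma nn_mult [intro]: "nn p \<Longrightarrow> nn r \<Longrightarrow> nn (p * r)"
  unfolding nn_def coeff_mult by (auto intro!: sum_nonneg)
lemma nn_sum [intro]: "(\<And>i. i \<in> A \<Longrightarrow> nn (f i)) \<Longrightarrow> nn (sum f A)"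
  unfolding nn_def coeff_sum by (auto intro!: sum_nonneg)
lemma nn_pow [intro]: "nn p \<Longrightarrow> nn (p ^ m)"
  by (induction m) auto

definition bb :: "nat \<Rightarrow> real poly" where "bb k = of_nat k + (of_nat k + 1) * qX"
definition ll :: "nat \<Rightarrow> real poly" where "ll k = (of_nat k + 1)^2 * qX"

lemma nn_bb [simp]: "nn (bb k)" unfolding bb_def by (intro nn_add nn_mult) auto
lemma nn_ll [simp]: "nn (ll k)" unfolding ll_def by (intro nn_add nn_mult nn_pow) auto

lemma prodP: "Lt (Suc n) k = Pv n k + bb k * Lt n k + ll k * Lt n (Suc k)"
  using prodF[of n k] TL[of n k] by (simp add: bb_def ll_def algebra_simps)

lemma Lt0_Suc: "Lt 0 (Suc k) = 0"
proof (induction k)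
  case 0 then show ?case by (simp add: eulerian_poly_0 Top_def Lt.simps(2))
next
  case (Suc k) then show ?case by (simp add: Lt.simps(2))
qed

lemma nn_Lt: "nn (Lt n k)"
proof (induction n arbitrary: k)
  case 0
  then show ?case by (cases k) (simp_all add: eulerian_poly_0 Lt0_Suc)
next
  case (Suc n)
  have "nn (Pv n k)" using Suc by (simp add: Pv_def)
  then show ?case unfolding prodP using Suc by (intro nn_add nn_mult) auto
qed

definition Pm :: "nat \<Rightarrow> nat \<Rightarrow> real poly" where
  "Pm i k = (if Suc i = k then 1 else if i = k then bb k else if i = Suc k then ll k else 0)"

lemma nn_Pm [simp]: "nn (Pm i k)" by (simp add: Pm_def)

lemma prod_sum: assumes "Suc k \<le> N"
  shows "Lt (Suc n) k = (\<Sum>i\<le>N. Lt n i * Pm i k)"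
proof -
  have "(\<Sum>i\<le>N. Lt n i * Pm i k) = (\<Sum>i\<le>N. (if Suc i = k then Lt n i else 0)
      + (if i = k then Lt n i * bb k else 0) + (if i = Suc k then Lt n i * ll k else 0))"
    by (rule sum.cong) (auto simp: Pm_def)
  also have "\<dots> = (\<Sum>i\<le>N. (if Suc i = k then Lt n i else 0))
      + Lt n k * bb k + Lt n (Suc k) * ll k"
    using assms by (simp add: sum.distrib sum.delta)
  also have "(\<Sum>i\<le>N. (if Suc i = k then Lt n i else 0)) = Pv n k"
  proof (cases k)
    case 0 then show ?thesis by (simp add: Pv_def)
  next
    case (Suc k')
    then have "(\<Sum>i\<le>N. (if Suc i = k then Lt n i else 0)) = (\<Sum>i\<le>N. (if i = k' then Lt n i else 0))"
      by (intro sum.cong) auto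
    also have "\<dots> = Lt n k'" using assms Suc by (simp add: sum.delta)
    finally show ?thesis using Suc by (simp add: Pv_def)
  qed
  finally show ?thesis by (simp add: prodP algebra_simps)
qed

lemma nn_det:
  assumes "i < j" "k < l"
  shows "nn (Pm i k * Pm j l - Pm i l * Pm j k)"
proof (cases "i = k \<and> j = Suc k \<and> l = Suc k")
  case True
  have "Pm i k * Pm j l - Pm i l * Pm j k = bb k * bb (Suc k) - ll k"
    using True by (simp add: Pm_def)
  also have "\<dots> = of_nat k * of_nat (Suc k) + of_nat (k * (k+2)) * qX
       + of_nat ((k+1)*(k+2)) * qX^2"
    by (simp add: bb_def ll_def algebra_simps power2_eq_square)
  finally show ?thesis by (metis nn_add nn_mult nn_of_nat nn_pow nn_qX)
next
  case False
  have z: "Pm i l * Pm j k = 0"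
    using assms False unfolding Pm_def by auto
  show ?thesis unfolding z diff_zero by (rule nn_mult) simp_all
qed

lemma cb:
  fixes x y :: "nat \<Rightarrow> 'a::comm_ring_1" and P :: "nat \<Rightarrow> nat \<Rightarrow> 'a"
  shows "(\<Sum>i\<le>N. x i * P i k) * (\<Sum>j\<le>N. y j * P j l) - (\<Sum>i\<le>N. x i * P i l) * (\<Sum>j\<le>N. y j * P j k)
    = (\<Sum>i\<le>N. \<Sum>j\<le>N. if i < j then (x i * y j - x j * y i) * (P i k * P j l - P i l * P j k) else 0)"
proof -
  define g where "g i j = x i * y j * (P i k * P j l - P i l * P j k)" for i j
  have "(\<Sum>i\<le>N. x i * P i k) * (\<Sum>j\<le>N. y j * P j l) - (\<Sum>i\<le>N. x i * P i l) * (\<Sum>j\<le>N. y j * P j k)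
      = (\<Sum>i\<le>N. \<Sum>j\<le>N. g i j)"
    by (simp add: g_def sum_product sum_subtractf[symmetric] algebra_simps)
  also have "\<dots> = (\<Sum>i\<le>N. \<Sum>j\<le>N. (if i < j then g i j else 0) + (if j < i then g i j else 0))"
    by (intro sum.cong refl) (auto simp: g_def)
  also have "\<dots> = (\<Sum>i\<le>N. \<Sum>j\<le>N. if i < j then g i j else 0) + (\<Sum>i\<le>N. \<Sum>j\<le>N. if j < i then g i j else 0)"
    by (simp add: sum.distrib)
  also have "(\<Sum>i\<le>N. \<Sum>j\<le>N. if j < i then g i j else 0) = (\<Sum>j\<le>N. \<Sum>i\<le>N. if j < i then g i j else 0)"
    by (rule sum.swap)
  also have "(\<Sum>i\<le>N. \<Sum>j\<le>N. if i < j then g i j else 0) + (\<Sum>j\<le>N. \<Sum>i\<le>N. if j < i then g i j else 0)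
     = (\<Sum>i\<le>N. \<Sum>j\<le>N. (if i < j then g i j else 0) + (if i < j then g j i else 0))"
    by (simp add: sum.distrib)
  also have "\<dots> = (\<Sum>i\<le>N. \<Sum>j\<le>N. if i < j then (x i * y j - x j * y i) * (P i k * P j l - P i l * P j k) else 0)"
    by (intro sum.cong refl) (auto simp: g_def algebra_simps)
  finally show ?thesis .
qed

lemma tp2: "k < l \<Longrightarrow> nn (Lt n k * Lt (Suc n) l - Lt n l * Lt (Suc n) k)"
proof (induction n arbitrary: k l)
  case 0
  then obtain l' where "l = Suc l'" by (cases l) auto
  then show ?case by (simp add: Lt0_Suc nn_Lt nn_mult)
next
  case (Suc n)
  define N where "N = Suc l"
  have kN: "Suc k \<le> N" and lN: "Suc l \<le> N" using Suc.prems by (auto simp: N_def)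
  have "Lt (Suc n) k * Lt (Suc (Suc n)) l - Lt (Suc n) l * Lt (Suc (Suc n)) k
     = (\<Sum>i\<le>N. Lt n i * Pm i k) * (\<Sum>j\<le>N. Lt (Suc n) j * Pm j l)
       - (\<Sum>i\<le>N. Lt n i * Pm i l) * (\<Sum>j\<le>N. Lt (Suc n) j * Pm j k)"
    using prod_sum[OF kN, of n] prod_sum[OF lN, of n] prod_sum[OF kN, of "Suc n"] prod_sum[OF lN, of "Suc n"]
    by simp
  also have "\<dots> = (\<Sum>i\<le>N. \<Sum>j\<le>N. if i < j then (Lt n i * Lt (Suc n) j - Lt n j * Lt (Suc n) i)
      * (Pm i k * Pm j l - Pm i l * Pm j k) else 0)"
    by (rule cb)
  finally have eq: "Lt (Suc n) k * Lt (Suc (Suc n)) l - Lt (Suc n) l * Lt (Suc (Suc n)) k = \<dots>" .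
  show ?case unfolding eq
    using Suc.IH nn_det Suc.prems by (auto intro!: nn_sum nn_mult)
qed

theorem proposition4p6:
  shows "q_log_convex eulerian_poly"
  unfolding q_log_convex_def q_le_def
proof (intro allI impI)
  fix n i :: nat
  assume "1 \<le> n"
  then obtain m where m: "n = Suc m" by (cases n) auto
  have A: "eulerian_poly (Suc s) = qX * (eulerian_poly s + Lt s 1)" for s
    using prodF[of s 0] TL[of s 0] by (simp add: Pv_def algebra_simps)
  have "eulerian_poly (n - 1) * eulerian_poly (n + 1) - eulerian_poly n ^ 2
      = qX * (Lt m 0 * Lt (Suc m) 1 - Lt m 1 * Lt (Suc m) 0)"
    unfolding m using A[of "Suc m"] A[of m] by (simp add: algebra_simps power2_eq_square)
  moreover have "nn (qX * (Lt m 0 * Lt (Suc m) 1 - Lt m 1 * Lt (Suc m) 0))"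
    using tp2[of 0 1 m] by auto
  ultimately show "0 \<le> coeff (eulerian_poly (n - 1) * eulerian_poly (n + 1) - eulerian_poly n ^ 2) i"
    by (simp add: nn_def)
qed

end
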